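(* Let $T=2^t$ with $t\ge1$, and let $A_1,\ldots,A_r$ be subsets of $\mathbb Z_T$, each of size at least $2$, with $r\ge T^3$. Then the multiset $A_1+A_2+\cdots+A_r$ has bias at most $O(T^{3/2}/r^{1/2})$ with respect to the subgroup $\{0,2^{t-1}\}$ (i.e. at most $c_0T^{3/2}/r^{1/2}$ for an absolute constant $c_0$).
   Context: $\mathbb Z_T$ is the additive cyclic group of order $T$. For multisets $A,B$ of $\mathbb Z_T$, $A+B$ is the multiset $\{a+b: a\in A, b\in B\}$ (with multiplicities). $\mu_A(x)$ denotes the multiplicity of $x$ in $A$. A multiset $A$ has bias at most $\epsilon$ with respect to a subgroup $H\le\mathbb Z_T$ if $\mu_A(a)\le(1+\epsilon)\mu_A(a+h)$ for all $a\in A$ and all $h\in H$. *)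

theory Defs
  imports Complex_Main "HOL-Library.Multiset"
begin

text \<open>Elements of Z_T are represented by the residues 0..T-1 (type nat).\<close>

definition zmod_set :: "nat \<Rightarrow> nat set" where
  "zmod_set T = {..<T}"

fun sumset_mset :: "nat \<Rightarrow> (nat \<Rightarrow> nat set) \<Rightarrow> nat \<Rightarrow> nat multiset" where
  "sumset_mset T A 0 = {#0#}"
| "sumset_mset T A (Suc k) =
     (\<Sum>a\<in>A k. image_mset (\<lambda>x. (x + a) mod T) (sumset_mset T A k))"

definition bias_at_most :: "nat \<Rightarrow> nat multiset \<Rightarrow> nat set \<Rightarrow> real \<Rightarrow> bool" where
  "bias_at_most T M H eps \<longleftrightarrow>
     (\<forall>a\<in>#M. \<forall>h\<in>H. real (count M a) \<le> (1 + eps) * real (count M ((a + h) mod T)))"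

end

theory Submission
  imports Defs
begin


lemma binom_step: "(n choose Suc k) * Suc k = (n choose k) * (n - k)"
  by (metis binomial_absorb_comp binomial_absorption mult.commute)

lemma binom_lower:
  assumes "2*p \<le> n+1" "p + k \<le> n"
  shows "real (n choose (p+k)) \<ge> real (n choose p) * (1 - real (k*(k+1)) / real (p+1))"
  using assms(2)
proof (induction k)
  case 0
  then show ?case by simp
next
  case (Suc k)
  define M where "M = real (n choose p)"
  have M0: "M \<ge> 0" unfolding M_def by simp
  show ?case
  proof (cases "real ((Suc k)*(Suc k+1)) \<le> real (p+1)")
    case False
    then have "1 - real (Suc k*(Suc k+1)) / real (p+1) < 0" by (simp add: field_simps)
    then have "M * (1 - real (Suc k*(Suc k+1)) / real (p+1)) \<le> 0"
      using M0 by (simp add: mult_nonneg_nonpos)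
    then show ?thesis using of_nat_0_le_iff[of "n choose (p + Suc k)"] unfolding M_def by linarith
  next
    case True
    have IH: "real (n choose (p+k)) \<ge> M * (1 - real (k*(k+1)) / real (p+1))"
      using Suc by (simp add: M_def)
    have kp: "2*k + 2 \<le> p+1"
    proof -
      have "2*(k+1) \<le> (k+1)*(k+2)" by simp
      moreover have "(k+1)*(k+2) \<le> p+1" using True by (simp only: of_nat_le_iff) (simp add: algebra_simps)
      ultimately show ?thesis by simp
    qed
    have a0: "1 - real (k*(k+1)) / real (p+1) \<ge> 0"
      using True by (simp add: field_simps)
    have st: "real (n choose (p + Suc k)) * real (p + k + 1) = real (n choose (p+k)) * real (n - (p+k))"
      using binom_step[of n "p+k"] by (metis add_Suc_right of_nat_mult Suc_eq_plus1)
    have nk: "real (n - (p+k)) \<ge> real p - 1 - real k" using assms(1) Suc.prems by simp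
    have b0: "(real p - 1 - real k) / real (p+k+1) \<ge> 1 - real (2*k+2) / real (p+1)"
      using kp by (simp add: field_simps)
    have "real (n choose (p + Suc k)) = real (n choose (p+k)) * real (n - (p+k)) / real (p+k+1)"
      using st by (simp add: field_simps)
    also have "\<dots> \<ge> real (n choose (p+k)) * (real p - 1 - real k) / real (p+k+1)"
      using nk by (simp add: divide_right_mono mult_left_mono)
    finally have c1: "real (n choose (p + Suc k)) \<ge> real (n choose (p+k)) * ((real p - 1 - real k) / real (p+k+1))" by simp
    have c2: "real (n choose (p+k)) * ((real p - 1 - real k) / real (p+k+1))
        \<ge> M * (1 - real (k*(k+1)) / real (p+1)) * (1 - real (2*k+2) / real (p+1))"
    proof (rule mult_mono)
      show "0 \<le> real (n choose (p + k))" by simp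
      show "0 \<le> 1 - real (2 * k + 2) / real (p + 1)" using kp by (simp add: field_simps)
    qed (use IH b0 in auto)
    have c3: "M * (1 - real (k*(k+1)) / real (p+1)) * (1 - real (2*k+2) / real (p+1))
        \<ge> M * (1 - real (Suc k*(Suc k+1)) / real (p+1))"
    proof -
      have "(1 - real (k*(k+1)) / real (p+1)) * (1 - real (2*k+2) / real (p+1))
          \<ge> 1 - real (Suc k*(Suc k+1)) / real (p+1)"
      proof -
        have "(1 - real (k*(k+1)) / real (p+1)) * (1 - real (2*k+2) / real (p+1))
           = 1 - (real (k*(k+1)) + real (2*k+2)) / real (p+1) + (real (k*(k+1)) / real (p+1)) * (real (2*k+2) / real (p+1))"
          by (simp only: add_divide_distrib) (simp only: algebra_simps)
        also have "\<dots> \<ge> 1 - (real (k*(k+1)) + real (2*k+2)) / real (p+1)"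
          by (simp del: of_nat_mult of_nat_add)
        also have "(real (k*(k+1)) + real (2*k+2)) = real (Suc k*(Suc k+1))"
          by (simp add: algebra_simps)
        finally show ?thesis by simp
      qed
      then show ?thesis using M0 mult_left_mono by (simp add: mult.assoc)
    qed
    show ?thesis using c1 c2 c3 unfolding M_def by linarith
  qed
qed



lemma binom_window:
  assumes "8*(w*(w+1)) \<le> 7*(n div 2 + 1)" "n div 2 - w \<le> j" "j \<le> n div 2 + w" "w \<le> n div 2"
  shows "8 * real (n choose j) \<ge> real (n choose (n div 2))"
proof -
  define q where "q = n div 2"
  have qn: "2*q \<le> n" "n \<le> 2*q+1" unfolding q_def by auto
  have h8: "8 * real (w*(w+1)) \<le> 7 * real (q+1)"
  proof -
    have "real (8*(w*(w+1))) \<le> real (7*(q+1))" using assms(1) unfolding q_def by (simp only: of_nat_le_iff)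
    then show ?thesis by (simp only: of_nat_mult of_nat_numeral)
  qed
  have w8: "real (w*(w+1)) / real (q+1) \<le> 7/8"
    using h8 by (simp add: divide_le_eq del: of_nat_mult of_nat_add)
  show ?thesis
  proof (cases "q \<le> j")
    case True
    define k where "k = j - q"
    have jk: "j = q + k" "k \<le> w" using True assms(3) unfolding k_def q_def by auto
    have "real (n choose (q+k)) \<ge> real (n choose q) * (1 - real (k*(k+1)) / real (q+1))"
      by (rule binom_lower) (use qn jk assms in \<open>auto simp: q_def\<close>)
    moreover have "real (k*(k+1)) / real (q+1) \<le> real (w*(w+1)) / real (q+1)"
    proof -
      have "real (k*(k+1)) \<le> real (w*(w+1))" using jk by (simp only: of_nat_le_iff) (intro mult_le_mono; simp)
      then show ?thesis by (rule divide_right_mono) simp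
    qed
    moreover have "real (n choose q) * (1 - real (k*(k+1)) / real (q+1)) \<ge> real (n choose q) * (1/8)"
    proof -
      have "1 - real (k*(k+1)) / real (q+1) \<ge> 1/8" using calculation(2) w8 by linarith
      then show ?thesis by (rule mult_left_mono) simp
    qed
    ultimately have "real (n choose (q+k)) \<ge> real (n choose q) * (1/8)"
      by linarith
    then have "real (n choose j) \<ge> real (n choose q) * (1/8)"
      using jk(1) by simp
    then show ?thesis unfolding q_def by simp
  next
    case False
    define k where "k = q - j"
    define p where "p = n - q"
    have jk: "n - j = p + k" "k \<le> w" "q \<le> p" "2*p \<le> n+1" "p + k \<le> n"
      using False assms(2) qn unfolding k_def q_def p_def by auto
    have "real (n choose (p+k)) \<ge> real (n choose p) * (1 - real (k*(k+1)) / real (p+1))"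
      by (rule binom_lower) (use jk in auto)
    moreover have "real (k*(k+1)) / real (p+1) \<le> real (w*(w+1)) / real (q+1)"
    proof -
      have kw: "real (k*(k+1)) \<le> real (w*(w+1))" using jk by (simp only: of_nat_le_iff) (intro mult_le_mono; simp)
      show ?thesis by (rule frac_le[OF _ kw]) (use jk in auto)
    qed
    moreover have e1: "n choose p = n choose q" unfolding p_def
      using binomial_symmetric[of q n] qn by simp
    moreover have e2: "n choose j = n choose (p + k)"
      using binomial_symmetric[of j n] jk False qn by simp
    moreover have "real (n choose p) * (1 - real (k*(k+1)) / real (p+1)) \<ge> real (n choose p) * (1/8)"
    proof -
      have "1 - real (k*(k+1)) / real (p+1) \<ge> 1/8" using calculation(2) w8 by linarith
      then show ?thesis by (rule mult_left_mono) simp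
    qed
    ultimately have "real (n choose (p+k)) \<ge> real (n choose p) * (1/8)"
      by linarith
    then have "real (n choose j) \<ge> real (n choose q) * (1/8)"
      by (simp only: e1 e2)
    then show ?thesis unfolding q_def by simp
  qed
qed

lemma mono_up:
  assumes "2*j + h \<le> n" shows "n choose j \<le> n choose (j+h)"
proof (cases "2*(j+h) \<le> n")
  case True then show ?thesis by (intro binomial_mono) auto
next
  case False
  have "n choose (j+h) = n choose (n - (j+h))" using assms by (intro binomial_symmetric) auto
  moreover have "n choose j \<le> n choose (n - (j+h))" using assms False by (intro binomial_mono) auto
  ultimately show ?thesis by simp
qed

lemma mono_down:
  assumes "n + h \<le> 2*j" "j \<le> n" shows "n choose j \<le> n choose (j-h)"
proof -
  have "n choose (n-j) \<le> n choose (n-j+h)" using assms by (intro mono_up) auto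
  moreover have "n choose j = n choose (n-j)" by (rule binomial_symmetric) (use assms in auto)
  moreover have "n choose (j-h) = n choose (n - (j-h))" by (rule binomial_symmetric) (use assms in auto)
  moreover have "n - (j-h) = n-j+h" using assms by auto
  ultimately show ?thesis by simp
qed

lemma sum_le_M:
  assumes "finite S" "card S \<le> 1"
  shows "(\<Sum>j\<in>S. real (n choose j)) \<le> real (n choose (n div 2))"
proof -
  have "(\<Sum>j\<in>S. real (n choose j)) \<le> real (card S) * real (n choose (n div 2))"
    using sum_bounded_above[of S "\<lambda>j. real (n choose j)" "real (n choose (n div 2))"]
      binomial_maximum by auto
  also have "\<dots> \<le> real (n choose (n div 2))" using assms(2)
    by (simp add: mult_le_cancel_right1)
  finally show ?thesis .
qed



lemma inj_part:
  fixes X Y :: "nat set"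
  assumes XS: "X \<subseteq> {..n}" and YS: "Y \<subseteq> {..n}" and h1: "h \<ge> 1"
    and up: "\<forall>j\<in>X. j + h \<le> n \<longrightarrow> j + h \<in> Y"
    and dn: "\<forall>j\<in>X. h \<le> j \<longrightarrow> j - h \<in> Y"
    and spX: "\<forall>j\<in>X. \<forall>j'\<in>X. j < j' \<longrightarrow> j + 2*h \<le> j'"
    and spY: "\<forall>j\<in>Y. \<forall>j'\<in>Y. j < j' \<longrightarrow> j + 2*h \<le> j'"
  shows "(\<Sum>j\<in>X. real (n choose j)) \<le> (\<Sum>j\<in>Y. real (n choose j)) + 2 * real (n choose (n div 2))"
proof -
  define C where "C = (\<lambda>j. real (n choose j))"
  define M where "M = real (n choose (n div 2))"
  define L where "L = {j\<in>X. 2*j + h \<le> n}"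
  define R where "R = {j\<in>X. n + h \<le> 2*j}"
  define Mi where "Mi = X - (L \<union> R)"
  have fX: "finite X" using XS finite_subset by blast
  have fY: "finite Y" using YS finite_subset by blast
  have fL: "finite L" "finite R" "finite Mi" using fX unfolding L_def R_def Mi_def by auto
  have LR: "L \<inter> R = {}" using h1 unfolding L_def R_def by auto
  have Xsplit: "X = (L \<union> R) \<union> Mi" "L \<union> R \<subseteq> X" unfolding Mi_def L_def R_def by auto
  have sX: "sum C X = sum C L + sum C R + sum C Mi"
    using Xsplit sum.union_disjoint[of "L \<union> R" Mi C] sum.union_disjoint[of L R C] fL LR
    unfolding Mi_def by auto
  define U where "U = (\<lambda>j. j + h) ` L"
  define V where "V = (\<lambda>j. j - h) ` R"
  have RX: "\<forall>j\<in>R. h \<le> j \<and> j \<le> n" using XS unfolding R_def by auto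
  have sL: "sum C L \<le> sum C U"
  proof -
    have "sum C L \<le> sum (\<lambda>j. C (j+h)) L"
      by (rule sum_mono) (auto simp: L_def C_def intro: mono_up)
    also have "\<dots> = sum C U" unfolding U_def by (subst sum.reindex) (auto simp: inj_on_def)
    finally show ?thesis .
  qed
  have sR: "sum C R \<le> sum C V"
  proof -
    have "sum C R \<le> sum (\<lambda>j. C (j-h)) R"
      by (rule sum_mono) (use RX in \<open>auto simp: R_def C_def intro: mono_down\<close>)
    also have "\<dots> = sum C V" unfolding V_def
      by (subst sum.reindex) (use RX in \<open>auto simp: inj_on_def, metis le_add_diff_inverse2\<close>)
    finally show ?thesis .
  qed
  have UY: "U \<subseteq> Y" using up unfolding U_def L_def by auto
  have VY: "V \<subseteq> Y" using dn RX unfolding V_def R_def by auto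
  have fUV: "finite U" "finite V" using fL unfolding U_def V_def by auto
  have UV: "sum C U + sum C V = sum C (U \<union> V) + sum C (U \<inter> V)"
    using sum.union_inter[OF fUV, of C] by simp
  have s1: "sum C (U \<union> V) \<le> sum C Y"
    by (rule sum_mono2) (use fY UY VY in \<open>auto simp: C_def\<close>)
  have cUV: "card (U \<inter> V) \<le> 1"
  proof -
    have b: "\<forall>y\<in>U \<inter> V. n \<le> 2*y + h \<and> 2*y \<le> n + h"
      unfolding U_def V_def L_def R_def by auto
    have "\<forall>a\<in>U \<inter> V. \<forall>b\<in>U \<inter> V. a = b"
    proof (intro ballI)
      fix a b assume ab: "a \<in> U \<inter> V" "b \<in> U \<inter> V"
      show "a = b"
      proof (rule ccontr)
        assume "a \<noteq> b"
        then consider "a < b" | "b < a" by linarith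
        then show False
        proof cases
          case 1 then have "a + 2*h \<le> b" using spY ab UY by blast
          moreover have "n \<le> 2*a+h" "2*b \<le> n+h" using b ab by auto
          ultimately show False using h1 by linarith
        next
          case 2 then have "b + 2*h \<le> a" using spY ab UY by blast
          moreover have "n \<le> 2*b+h" "2*a \<le> n+h" using b ab by auto
          ultimately show False using h1 by linarith
        qed
      qed
    qed
    then show ?thesis using card_le_Suc0_iff_eq[of "U \<inter> V"] fUV by auto
  qed
  have cMi: "card Mi \<le> 1"
  proof -
    have b: "\<forall>y\<in>Mi. n < 2*y + h \<and> 2*y < n + h \<and> y \<in> X"
      unfolding Mi_def L_def R_def by auto
    have "\<forall>a\<in>Mi. \<forall>b\<in>Mi. a = b"
    proof (intro ballI)
      fix a b assume ab: "a \<in> Mi" "b \<in> Mi"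
      show "a = b"
      proof (rule ccontr)
        assume "a \<noteq> b"
        then consider "a < b" | "b < a" by linarith
        then show False
        proof cases
          case 1 then have "a + 2*h \<le> b" using spX ab b by blast
          moreover have "n < 2*a+h" "2*b < n+h" using b ab by auto
          ultimately show False using h1 by linarith
        next
          case 2 then have "b + 2*h \<le> a" using spX ab b by blast
          moreover have "n < 2*b+h" "2*a < n+h" using b ab by auto
          ultimately show False using h1 by linarith
        qed
      qed
    qed
    then show ?thesis using card_le_Suc0_iff_eq[of Mi] fL by auto
  qed
  have s2: "sum C (U \<inter> V) \<le> M" unfolding C_def M_def
    by (rule sum_le_M) (use fUV cUV in auto)
  have s3: "sum C Mi \<le> M" unfolding C_def M_def
    by (rule sum_le_M) (use fL cMi in auto)
  have "sum C X \<le> sum C Y + 2 * M" using sX sL sR UV s1 s2 s3 by linarith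
  then show ?thesis unfolding C_def M_def .
qed



lemma exists_in_class:
  assumes m: "(m::nat) \<ge> 1" shows "\<exists>a. L \<le> a \<and> a < L + m \<and> a mod m = y mod m"
proof -
  define a where "a = L + ((y mod m + m - L mod m) mod m)"
  have "a mod m = (L + (y mod m + m - L mod m)) mod m" unfolding a_def by (simp add: mod_add_right_eq)
  also have "L + (y mod m + m - L mod m) = m * (L div m) + (y mod m + m)"
  proof -
    have "L mod m < m" using m by simp
    moreover have "L = m * (L div m) + L mod m" by simp
    ultimately show ?thesis by linarith
  qed
  also have "(m * (L div m) + (y mod m + m)) mod m = y mod m" by simp
  finally show ?thesis using m unfolding a_def
    by (metis add_less_cancel_left le_add1 less_le_trans mod_less_divisor zero_less_one)
qed

lemma lower_part:
  assumes YS: "Y \<subseteq> {..n}" and y0: "y0 \<in> Y"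
    and dense: "\<forall>j\<le>n. j mod m = y0 mod m \<longrightarrow> j \<in> Y" and m1: "m \<ge> 1"
    and w8: "8*(w*(w+1)) \<le> 7*(n div 2 + 1)" and wq: "w \<le> n div 2" and mw: "m \<le> 2*w+1"
  shows "real ((2*w+1) div m) * real (n choose (n div 2)) \<le> 8 * (\<Sum>j\<in>Y. real (n choose j))"
proof -
  define q where "q = n div 2"
  define K where "K = (2*w+1) div m"
  obtain a where a: "q - w \<le> a" "a < q - w + m" "a mod m = y0 mod m"
    using exists_in_class[OF m1] by blast
  have Km: "K * m \<le> 2*w+1" unfolding K_def by simp
  have qwn: "q + w \<le> n" using wq unfolding q_def by linarith
  have el: "q - w \<le> a + i*m \<and> a + i*m \<le> q + w" if "i < K" for i
  proof -
    have "i*m + m \<le> K*m" using that by (metis Suc_leI mult_Suc mult_le_mono1 add.commute)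
    then show ?thesis using a Km wq unfolding q_def by linarith
  qed
  define S where "S = (\<lambda>i. a + i*m) ` {..<K}"
  have SY: "S \<subseteq> Y"
  proof
    fix j assume "j \<in> S"
    then obtain i where i: "i < K" "j = a + i*m" unfolding S_def by auto
    have "j \<le> n" using el[OF i(1)] qwn i(2) unfolding q_def by linarith
    moreover have "j mod m = y0 mod m" using i a(3) by simp
    ultimately show "j \<in> Y" using dense by blast
  qed
  have fY: "finite Y" using YS finite_subset by blast
  have "(\<Sum>j\<in>S. real (n choose j)) = (\<Sum>i<K. real (n choose (a + i*m)))"
    unfolding S_def using m1 by (subst sum.reindex) (auto simp: inj_on_def)
  also have "\<dots> \<ge> (\<Sum>i<K. real (n choose q) / 8)"
  proof (rule sum_mono)
    fix i assume "i \<in> {..<K}"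
    then have "8 * real (n choose (a+i*m)) \<ge> real (n choose (n div 2))"
      using el[of i] by (intro binom_window[OF w8]) (auto simp: q_def wq)
    then show "real (n choose q) / 8 \<le> real (n choose (a + i*m))" unfolding q_def by simp
  qed
  finally have "real K * real (n choose q) / 8 \<le> (\<Sum>j\<in>S. real (n choose j))" by simp
  also have "\<dots> \<le> (\<Sum>j\<in>Y. real (n choose j))"
    by (rule sum_mono2[OF fY SY]) simp
  finally show ?thesis unfolding K_def q_def by simp
qed



lemma aux_lin: "(W::real) \<le> N/4 \<Longrightarrow> (N - 1)/2 \<le> Q \<Longrightarrow> 0 \<le> N - 8/3*s + 16/9 \<Longrightarrow> x \<le> s/2 \<Longrightarrow> 8*W + 8*x \<le> 7*(Q+1)"
  by argo

lemma binom_ratio: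
  fixes X Y :: "nat set"
  assumes XS: "X \<subseteq> {..n}" and YS: "Y \<subseteq> {..n}" and h1: "h \<ge> 1"
    and up: "\<forall>j\<in>X. j + h \<le> n \<longrightarrow> j + h \<in> Y"
    and dn: "\<forall>j\<in>X. h \<le> j \<longrightarrow> j - h \<in> Y"
    and spX: "\<forall>j\<in>X. \<forall>j'\<in>X. j < j' \<longrightarrow> j + 2*h \<le> j'"
    and spY: "\<forall>j\<in>Y. \<forall>j'\<in>Y. j < j' \<longrightarrow> j + 2*h \<le> j'"
    and dense: "\<forall>y\<in>Y. \<forall>j\<le>n. j mod (2*h) = y mod (2*h) \<longrightarrow> j \<in> Y"
    and nm: "(2*h)^2 \<le> n"
  shows "(\<Sum>j\<in>X. real (n choose j)) \<le> (1 + 64 * real (2*h) / sqrt (real n)) * (\<Sum>j\<in>Y. real (n choose j))"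
proof (cases "X = {}")
  case True
  have "0 \<le> (1 + 64 * real (2*h) / sqrt (real n)) * (\<Sum>j\<in>Y. real (n choose j))"
    by (intro mult_nonneg_nonneg sum_nonneg) auto
  then show ?thesis using True by simp
next
  case False
  define m where "m = 2*h"
  define SY where "SY = (\<Sum>j\<in>Y. real (n choose j))"
  define SX where "SX = (\<Sum>j\<in>X. real (n choose j))"
  define M where "M = real (n choose (n div 2))"
  define s where "s = sqrt (real n)"
  have m2: "m \<ge> 2" using h1 unfolding m_def by simp
  have n4: "n \<ge> 4"
  proof -
    have "(2::nat)^2 \<le> (2*h)^2" by (rule power_mono) (use h1 in auto)
    then show ?thesis using nm by simp
  qed
  have ss: "s * s = real n" unfolding s_def by simp
  have s0: "s \<ge> 0" unfolding s_def by simp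
  have sm: "s \<ge> real m"
  proof -
    have "real (m^2) \<le> real n" using nm unfolding m_def by (simp only: of_nat_le_iff)
    then have "real m ^ 2 \<le> real n" by simp
    then show ?thesis unfolding s_def by (rule real_le_rsqrt)
  qed
  have s2: "s \<ge> 2" using sm m2 by linarith
  obtain j0 where j0: "j0 \<in> X" using False by blast
  obtain y0 where y0: "y0 \<in> Y"
  proof (cases "j0 + h \<le> n")
    case True then show ?thesis using that up j0 by blast
  next
    case False
    have "h \<le> j0"
    proof -
      have "2*h \<le> (2*h)^2" by (simp only: power2_eq_square le_square)
      then have "2*h \<le> n" using nm by linarith
      then show ?thesis using False by linarith
    qed
    then show ?thesis using that dn j0 by blast
  qed
  have nd2: "real (n div 2) \<ge> (real n - 1)/2"
  proof -
    have "n \<le> 2*(n div 2) + 1" by auto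
    then have "real n \<le> real (2*(n div 2) + 1)" by (simp only: of_nat_le_iff)
    then show ?thesis by simp
  qed
  define w where "w = nat \<lfloor>s / 2\<rfloor>"
  have w1: "real w \<le> s / 2" "real w > s / 2 - 1" unfolding w_def using s0
    by (auto simp: of_nat_nat) linarith+
  have mw: "m \<le> 2*w+1"
  proof -
    have "real m < real (2*w+2)" using w1 sm by simp
    then show ?thesis by linarith
  qed
  have wq: "w \<le> n div 2"
  proof -
    have "2 * s \<le> s * s" using s2 s0 by (intro mult_right_mono) auto
    then have "real n \<ge> s + 2" using ss s2 by linarith
    moreover note nd2
    ultimately have "real w \<le> real (n div 2)" using w1 by linarith
    then show ?thesis by linarith
  qed
  have w8: "8*(w*(w+1)) \<le> 7*(n div 2 + 1)"
  proof -
    have a: "real w * real w \<le> (s/2) * (s/2)" using w1 by (intro mult_mono) auto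
    note b = nd2
    have c0: "0 \<le> (s - 4/3) * (s - 4/3)" by simp
    have c: "s*s - 8/3*s + 16/9 \<ge> 0" using c0 by (simp add: algebra_simps)
    have a': "real w * real w \<le> (s*s)/4" using a by simp
    have a'': "real w * real w \<le> real n / 4" using a' ss by simp
    have c': "real n - 8/3*s + 16/9 \<ge> 0" using c ss by simp
    have "8 * (real w * real w) + 8 * real w \<le> 7 * (real (n div 2) + 1)"
      using aux_lin[OF a'' b c' w1(1)] .
    moreover have "real w * (real w + 1) = real w * real w + real w" by (simp add: distrib_left)
    ultimately have "8 * (real w * (real w + 1)) \<le> 7 * (real (n div 2) + 1)"
      by argo
    then have "real (8*(w*(w+1))) \<le> real (7*(n div 2 + 1))" by (simp only: of_nat_mult of_nat_add of_nat_numeral of_nat_1)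
    then show ?thesis by (simp only: of_nat_le_iff)
  qed
  have I: "SX \<le> SY + 2 * M" unfolding SX_def SY_def M_def
    by (rule inj_part[OF XS YS h1 up dn spX spY])
  define K where "K = (2*w+1) div m"
  have Lo: "real K * M \<le> 8 * SY" unfolding K_def M_def SY_def
    by (rule lower_part[OF YS y0]) (use dense y0 m2 w8 wq mw in \<open>auto simp: m_def\<close>)
  have K1: "K \<ge> 1" unfolding K_def using div_le_mono[OF mw, of m] m2 by simp
  have K2: "real K * (2 * real m) \<ge> real (2*w+1)"
  proof -
    have "2*w+1 < (K+1)*m"
    proof -
      have "2*w+1 = K*m + (2*w+1) mod m" unfolding K_def by simp
      moreover have "(2*w+1) mod m < m" using m2 by simp
      ultimately show ?thesis by (simp add: algebra_simps)
    qed
    also have "(K+1)*m \<le> K * (2*m)" using K1 by simp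
    finally show ?thesis by (metis of_nat_le_iff of_nat_mult of_nat_numeral order_less_imp_le)
  qed
  have w2: "real (2*w+1) \<ge> s/2" using w1 s2 by simp
  have SY0: "SY \<ge> 0" unfolding SY_def by (simp add: sum_nonneg)
  have M0: "M \<ge> 0" unfolding M_def by simp
  have "2 * M \<le> 16 * SY / real K" using Lo K1 by (simp add: field_simps)
  also have "16 * SY / real K \<le> 64 * real m / s * SY"
  proof -
    have "16 / real K \<le> 64 * real m / s"
    proof -
      have "16 * s \<le> 16 * (2 * real (2*w+1))" using w2 by argo
      also have "\<dots> \<le> 16 * (2 * (real K * (2 * real m)))" using K2 by argo
      finally have "16 * s \<le> 64 * real m * real K" by simp
      then show ?thesis using K1 s2 by (simp add: field_simps)
    qed
    then show ?thesis using SY0 mult_right_mono by fastforce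
  qed
  finally have "SX \<le> (1 + 64 * real m / s) * SY" using I by (simp add: algebra_simps)
  then show ?thesis unfolding SX_def SY_def m_def s_def .
qed



lemma odd_decomp: "(d::nat) > 0 \<Longrightarrow> \<exists>v u. d = 2^v * u \<and> odd u"
proof (induction d rule: less_induct)
  case (less d)
  show ?case
  proof (cases "odd d")
    case True
    have dd: "d = 2^0 * d" by simp
    show ?thesis using dd True by (intro exI[of _ 0] exI[of _ d] conjI)
  next
    case False
    then obtain e where e: "d = 2*e" by blast
    then have "e < d" "e > 0" using less.prems by auto
    then obtain v u where vu: "e = 2^v * u" "odd u" using less.IH by blast
    have dd: "d = 2^(Suc v) * u" using vu e by simp
    show ?thesis using dd vu(2) by (intro exI[of _ "Suc v"] exI[of _ u] conjI)
  qed
qed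

lemma key_cong:
  fixes T v u c :: nat
  assumes T: "T = 2^t" and vt: "v \<le> t" and u: "odd u"
  shows "(c + j*(2^v*u)) mod T = (c + j'*(2^v*u)) mod T \<longleftrightarrow> (2::int)^(t-v) dvd (int j - int j')"
proof -
  have "(c + j*(2^v*u)) mod T = (c + j'*(2^v*u)) mod T \<longleftrightarrow>
        int (c + j*(2^v*u)) mod int T = int (c + j'*(2^v*u)) mod int T"
    by (simp only: of_nat_mod[symmetric] of_nat_eq_iff)
  also have "\<dots> \<longleftrightarrow> int T dvd int (c + j*(2^v*u)) - int (c + j'*(2^v*u))"
    by (rule mod_eq_dvd_iff)
  also have "int (c + j*(2^v*u)) - int (c + j'*(2^v*u)) = (int j - int j') * (2^v * int u)"
    by (simp add: algebra_simps)
  also have "int T = 2^(t-v) * 2^v" using T vt by (simp add: power_add[symmetric])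
  also have "2^(t-v) * 2^v dvd (int j - int j') * (2^v * int u) \<longleftrightarrow> (2::int)^(t-v) dvd (int j - int j') * int u"
    by (simp add: mult.commute mult.left_commute)
  also have "\<dots> \<longleftrightarrow> (2::int)^(t-v) dvd (int j - int j')"
  proof -
    have "coprime ((2::int)^(t-v)) (int u)" using u by (simp add: coprime_commute)
    then show ?thesis by (simp add: coprime_dvd_mult_left_iff)
  qed
  finally show ?thesis .
qed



definition Bn :: "nat \<Rightarrow> nat \<Rightarrow> nat \<Rightarrow> nat \<Rightarrow> nat \<Rightarrow> real" where
  "Bn T d n c x = (\<Sum>j\<in>{j. j \<le> n \<and> (c + j*d) mod T = x}. real (n choose j))"

lemma B_good:
  assumes T: "T = 2^t" "t \<ge> 1" and d: "0 < d" "d < T" and n: "T^2 \<le> n" and x: "x < T"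
  shows "Bn T d n c x \<le> (1 + 64 * real T / sqrt (real n)) * Bn T d n c ((x + T div 2) mod T)"
proof -
  obtain v u where vu: "d = 2^v * u" "odd u" using odd_decomp d(1) by blast
  have vt: "v < t"
  proof -
    have "u \<ge> 1" using vu(2) by (cases u) auto
    then have "2^v \<le> d" using vu(1) by simp
    then have "(2::nat)^v < 2^t" using d T by linarith
    then show ?thesis using power_less_imp_less_exp[of "2::nat" v t] by simp
  qed
  define h where "h = (2::nat)^(t-1-v)"
  have h2: "2*h = 2^(t-v)" unfolding h_def using vt
    by (metis Suc_diff_Suc diff_Suc_eq_diff_pred power_Suc)
  have h1: "h \<ge> 1" unfolding h_def by simp
  have T2: "T div 2 = 2^(t-1)" using T by (cases t) auto
  have TT: "T div 2 + T div 2 = T" using T by (cases t) auto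
  have hd: "(h*d) mod T = T div 2"
  proof -
    have "h*d = 2^(t-1) * u" unfolding h_def vu(1) using vt
      by (simp add: mult.assoc power_add[symmetric])
    moreover obtain k where "u = 2*k+1" using vu(2) oddE by blast
    ultimately have "h*d = T * k + 2^(t-1)" using T by (cases t) (auto simp: algebra_simps)
    moreover have "(2::nat)^(t-1) < T" using T by simp
    ultimately show ?thesis using T2 by simp
  qed
  define X where "X = {j. j \<le> n \<and> (c + j*d) mod T = x}"
  define y where "y = (x + T div 2) mod T"
  define Y where "Y = {j. j \<le> n \<and> (c + j*d) mod T = y}"
  have kc: "(c + j*d) mod T = (c + j'*d) mod T \<longleftrightarrow> (2::int)^(t-v) dvd (int j - int j')" for j j'
    using key_cong[OF T(1) _ vu(2), of v c j j'] vt vu(1) by simp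
  have XS: "X \<subseteq> {..n}" "Y \<subseteq> {..n}" unfolding X_def Y_def by auto
  have up: "\<forall>j\<in>X. j + h \<le> n \<longrightarrow> j + h \<in> Y"
  proof (intro ballI impI)
    fix j assume j: "j \<in> X" "j + h \<le> n"
    have "(c + (j+h)*d) mod T = ((c + j*d) + h*d) mod T" by (simp add: algebra_simps)
    also have "\<dots> = ((c + j*d) mod T + (h*d) mod T) mod T" by (rule mod_add_eq[symmetric])
    also have "\<dots> = y" using j hd unfolding X_def y_def by simp
    finally show "j + h \<in> Y" using j unfolding Y_def by simp
  qed
  have dn: "\<forall>j\<in>X. h \<le> j \<longrightarrow> j - h \<in> Y"
  proof (intro ballI impI)
    fix j assume j: "j \<in> X" "h \<le> j"
    define z where "z = c + (j-h)*d"
    have jj: "(j-h)*d + h*d = j*d" using j(2) by (simp add: add_mult_distrib[symmetric])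
    have "c + j*d = z + h*d" unfolding z_def using jj by simp
    then have "x = (z + h*d) mod T" using j unfolding X_def by simp
    also have "\<dots> = (z mod T + (h*d) mod T) mod T" by (rule mod_add_eq[symmetric])
    finally have "x = (z mod T + T div 2) mod T" using hd by simp
    then have "y = ((z mod T + T div 2) mod T + T div 2) mod T" unfolding y_def by simp
    also have "\<dots> = (z mod T + (T div 2 + T div 2)) mod T" by (simp add: mod_add_left_eq add.assoc)
    also have "\<dots> = z mod T" using TT by simp
    finally have "z mod T = y" by simp
    then show "j - h \<in> Y" using j unfolding Y_def z_def X_def by auto
  qed
  have sp: "\<forall>j\<in>S. \<forall>j'\<in>S. j < j' \<longrightarrow> j + 2*h \<le> j'" if S: "S = {j. j \<le> n \<and> (c + j*d) mod T = w}" for S w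
  proof (intro ballI impI)
    fix j j' assume jj: "j \<in> S" "j' \<in> S" "j < j'"
    then have "(c + j'*d) mod T = (c + j*d) mod T" using S by simp
    then have dv: "(2::int)^(t-v) dvd (int j' - int j)" using kc by blast
    have "(2::int)^(t-v) \<le> int j' - int j" by (rule zdvd_imp_le[OF dv]) (use jj in simp)
    then have "int (2*h) \<le> int j' - int j" using h2 by simp
    then show "j + 2*h \<le> j'" by linarith
  qed
  have spX: "\<forall>j\<in>X. \<forall>j'\<in>X. j < j' \<longrightarrow> j + 2*h \<le> j'" by (rule sp) (simp add: X_def)
  have spY: "\<forall>j\<in>Y. \<forall>j'\<in>Y. j < j' \<longrightarrow> j + 2*h \<le> j'" by (rule sp) (simp add: Y_def)
  have dense: "\<forall>y'\<in>Y. \<forall>j\<le>n. j mod (2*h) = y' mod (2*h) \<longrightarrow> j \<in> Y"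
  proof (intro ballI allI impI)
    fix y' j assume a: "y' \<in> Y" "j \<le> n" "j mod (2*h) = y' mod (2*h)"
    have "int j mod int (2*h) = int y' mod int (2*h)" using a(3) by (metis of_nat_mod)
    then have "int (2*h) dvd int j - int y'" by (simp add: mod_eq_dvd_iff)
    then have "(2::int)^(t-v) dvd int j - int y'" using h2 by simp
    then have "(c + j*d) mod T = (c + y'*d) mod T" using kc by blast
    then show "j \<in> Y" using a unfolding Y_def by simp
  qed
  have nm: "(2*h)^2 \<le> n"
  proof -
    have "2*h \<le> T" using h2 T by simp
    then have "(2*h)^2 \<le> T^2" by (rule power_mono) simp
    then show ?thesis using n by simp
  qed
  have R: "(\<Sum>j\<in>X. real (n choose j)) \<le> (1 + 64 * real (2*h) / sqrt (real n)) * (\<Sum>j\<in>Y. real (n choose j))"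
    by (rule binom_ratio[OF XS h1 up dn spX spY dense nm])
  have "64 * real (2*h) / sqrt (real n) \<le> 64 * real T / sqrt (real n)"
  proof -
    have "real (2*h) \<le> real T" using h2 T by simp
    then show ?thesis by (simp add: divide_right_mono)
  qed
  then have "(1 + 64 * real (2*h) / sqrt (real n)) * (\<Sum>j\<in>Y. real (n choose j))
      \<le> (1 + 64 * real T / sqrt (real n)) * (\<Sum>j\<in>Y. real (n choose j))"
    by (intro mult_right_mono) (auto simp: sum_nonneg)
  then show ?thesis using R unfolding Bn_def X_def Y_def y_def by linarith
qed



definition psc :: "nat \<Rightarrow> nat \<Rightarrow> (nat \<Rightarrow> nat) \<Rightarrow> nat set \<Rightarrow> nat \<Rightarrow> real" where
  "psc T b d I x = real (card {J. J \<subseteq> I \<and> (b + sum d J) mod T = x})"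

lemma psc_insert:
  assumes "finite I" "i \<notin> I"
  shows "psc T b d (insert i I) x = psc T b d I x + psc T (b + d i) d I x"
proof -
  define A where "A = {J. J \<subseteq> I \<and> (b + sum d J) mod T = x}"
  define B where "B = {J. J \<subseteq> I \<and> (b + d i + sum d J) mod T = x}"
  have eq: "{J. J \<subseteq> insert i I \<and> (b + sum d J) mod T = x} = A \<union> insert i ` B"
  proof (intro set_eqI iffI)
    fix J assume J: "J \<in> {J. J \<subseteq> insert i I \<and> (b + sum d J) mod T = x}"
    show "J \<in> A \<union> insert i ` B"
    proof (cases "i \<in> J")
      case True
      have "J - {i} \<subseteq> I" using J by auto
      moreover have fJ: "finite (J - {i})" using J assms(1) finite_subset by blast
      moreover have "sum d J = d i + sum d (J - {i})" using True fJ
        by (metis sum.remove finite_Diff2 finite_insert insert_Diff)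
      ultimately have "J - {i} \<in> B" using J unfolding B_def by (simp add: add.assoc)
      moreover have "J = insert i (J - {i})" using True by auto
      ultimately show ?thesis by blast
    next
      case False
      then have "J \<subseteq> I" using J by auto
      then show ?thesis using J unfolding A_def by auto
    qed
  next
    fix J assume "J \<in> A \<union> insert i ` B"
    then show "J \<in> {J. J \<subseteq> insert i I \<and> (b + sum d J) mod T = x}"
    proof
      assume "J \<in> A" then show ?thesis unfolding A_def by auto
    next
      assume "J \<in> insert i ` B"
      then obtain K where K: "K \<in> B" "J = insert i K" by blast
      have "finite K" "i \<notin> K" using K assms unfolding B_def by (auto intro: finite_subset)
      then have "sum d J = d i + sum d K" using K by simp
      then show ?thesis using K unfolding B_def by (auto simp: add.assoc)
    qed
  qed
  have fA: "finite A" "finite B" using assms(1) unfolding A_def B_def by auto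
  have disj: "A \<inter> insert i ` B = {}" using assms(2) unfolding A_def B_def by auto
  have inj: "inj_on (insert i) B"
  proof (rule inj_onI)
    fix a c assume ac: "a \<in> B" "c \<in> B" "insert i a = insert i c"
    moreover have "i \<notin> a" "i \<notin> c" using ac assms(2) unfolding B_def by auto
    ultimately show "a = c" by (metis Diff_insert_absorb)
  qed
  have "card (A \<union> insert i ` B) = card A + card B"
    using card_Un_disjoint[of A "insert i ` B"] fA disj card_image[OF inj] by simp
  then show ?thesis unfolding psc_def using eq A_def B_def by simp
qed

lemma psc_binom:
  assumes "finite D" "\<forall>i\<in>D. d i = dd"
  shows "psc T b d D x = Bn T dd (card D) b x"
proof -
  define n where "n = card D"
  define Q where "Q = {j. j \<le> n \<and> (b + j*dd) mod T = x}"
  have sd: "sum d J = card J * dd" if "J \<subseteq> D" for J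
    using assms(2) that by (simp add: subset_eq)
  have eq: "{J. J \<subseteq> D \<and> (b + sum d J) mod T = x} = (\<Union>j\<in>Q. {J. J \<subseteq> D \<and> card J = j})"
  proof (intro set_eqI iffI)
    fix J assume J: "J \<in> {J. J \<subseteq> D \<and> (b + sum d J) mod T = x}"
    then have "card J \<le> n" unfolding n_def using assms(1) by (simp add: card_mono)
    then show "J \<in> (\<Union>j\<in>Q. {J. J \<subseteq> D \<and> card J = j})" using J sd unfolding Q_def by auto
  next
    fix J assume "J \<in> (\<Union>j\<in>Q. {J. J \<subseteq> D \<and> card J = j})"
    then show "J \<in> {J. J \<subseteq> D \<and> (b + sum d J) mod T = x}" using sd unfolding Q_def by auto
  qed
  have fQ: "finite Q" unfolding Q_def by auto
  have "card (\<Union>j\<in>Q. {J. J \<subseteq> D \<and> card J = j}) = (\<Sum>j\<in>Q. card {J. J \<subseteq> D \<and> card J = j})"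
    by (rule card_UN_disjoint[OF fQ]) (use assms(1) in \<open>auto intro: finite_subset\<close>)
  also have "\<dots> = (\<Sum>j\<in>Q. n choose j)" unfolding n_def using n_subsets[OF assms(1)] by simp
  finally show ?thesis unfolding psc_def Bn_def using eq Q_def n_def by simp
qed

lemma psc_good_aux:
  assumes T: "T = 2^t" "t \<ge> 1" and dd: "0 < dd" "dd < T" and fD: "finite D"
    and D: "\<forall>i\<in>D. d i = dd" and n: "T^2 \<le> card D"
    and fR: "finite R" and RD: "R \<inter> D = {}"
  shows "\<forall>b x. x < T \<longrightarrow> psc T b d (D \<union> R) x \<le> (1 + 64 * real T / sqrt (real (card D))) * psc T b d (D \<union> R) ((x + T div 2) mod T)"
  using fR RD
proof (induction R rule: finite_induct)
  case empty
  show ?case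
  proof (intro allI impI)
    fix b x assume x: "x < T"
    show "psc T b d (D \<union> {}) x \<le> (1 + 64 * real T / sqrt (real (card D))) * psc T b d (D \<union> {}) ((x + T div 2) mod T)"
      using B_good[OF T dd n x, of b] psc_binom[OF fD D] by simp
  qed
next
  case (insert i R)
  have IH: "\<forall>b x. x < T \<longrightarrow> psc T b d (D \<union> R) x \<le> (1 + 64 * real T / sqrt (real (card D))) * psc T b d (D \<union> R) ((x + T div 2) mod T)"
    using insert by auto
  have iDR: "i \<notin> D \<union> R" using insert by auto
  have fDR: "finite (D \<union> R)" using fD insert by auto
  have eq: "D \<union> insert i R = insert i (D \<union> R)" by auto
  show ?case
  proof (intro allI impI)
    fix b x assume x: "x < T"
    have "(x + T div 2) mod T < T" using T by simp
    then show "psc T b d (D \<union> insert i R) x \<le> (1 + 64 * real T / sqrt (real (card D))) * psc T b d (D \<union> insert i R) ((x + T div 2) mod T)"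
      unfolding eq psc_insert[OF fDR iDR] using IH x by (simp add: distrib_left add_mono)
  qed
qed



lemma shift_iff:
  fixes T a x y :: nat
  assumes "x < T" "a < T"
  shows "(y + a) mod T = x \<longleftrightarrow> y mod T = (x + T - a) mod T"
proof
  assume h: "(y + a) mod T = x"
  have "(x + T - a) mod T = ((y + a) mod T + (T - a)) mod T" using h assms by simp
  also have "\<dots> = (y + a + (T - a)) mod T" by (simp add: mod_add_left_eq)
  also have "y + a + (T - a) = y + T" using assms by simp
  also have "(y + T) mod T = y mod T" by simp
  finally show "y mod T = (x + T - a) mod T" by simp
next
  assume h: "y mod T = (x + T - a) mod T"
  have "(y + a) mod T = (y mod T + a) mod T" by (simp add: mod_add_left_eq)
  also have "\<dots> = ((x + T - a) mod T + a) mod T" using h by simp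
  also have "\<dots> = (x + T - a + a) mod T" by (simp add: mod_add_left_eq)
  also have "x + T - a + a = x + T" using assms by simp
  also have "(x + T) mod T = x" using assms by simp
  finally show "(y + a) mod T = x" .
qed

lemma psc_modb:
  assumes "c mod T = c' mod T"
  shows "psc T c d I x = psc T c' d I x"
proof -
  have "(c + s) mod T = (c' + s) mod T" for s using assms by (metis mod_add_left_eq)
  then show ?thesis unfolding psc_def by simp
qed

lemma psc_shift:
  assumes "x < T" "a < T"
  shows "psc T (b + a) d I x = psc T b d I ((x + T - a) mod T)"
proof -
  have "(b + a + s) mod T = x \<longleftrightarrow> (b + s) mod T = (x + T - a) mod T" for s
    using shift_iff[OF assms, of "b + s"] by (simp add: add.commute add.left_commute)
  moreover have "(x + T - a) mod T < T" using assms by simp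
  ultimately show ?thesis unfolding psc_def
    by (metis (no_types, lifting) mod_less)
qed

lemma psc_dcong:
  assumes "\<forall>i\<in>I. d i = d' i"
  shows "psc T b d I x = psc T b d' I x"
proof -
  have "J \<subseteq> I \<Longrightarrow> sum d J = sum d' J" for J using assms by (intro sum.cong) auto
  then have "{J. J \<subseteq> I \<and> (b + sum d J) mod T = x} = {J. J \<subseteq> I \<and> (b + sum d' J) mod T = x}" by auto
  then show ?thesis unfolding psc_def by simp
qed

lemma psc_pair:
  assumes x: "x < T" and a: "a < T" "a' < T"
  shows "psc T (b + a) (d(k := (a' + T - a) mod T)) {..<Suc k} x
       = psc T b d {..<k} ((x + T - a) mod T) + psc T b d {..<k} ((x + T - a') mod T)"
proof -
  define d' where "d' = d(k := (a' + T - a) mod T)"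
  have ins: "{..<Suc k} = insert k {..<k}" by auto
  have "psc T (b + a) d' {..<Suc k} x = psc T (b + a) d' {..<k} x + psc T (b + a + d' k) d' {..<k} x"
    unfolding ins by (rule psc_insert) auto
  also have "psc T (b + a) d' {..<k} x = psc T (b + a) d {..<k} x"
    by (rule psc_dcong) (auto simp: d'_def)
  also have "psc T (b + a + d' k) d' {..<k} x = psc T (b + a + d' k) d {..<k} x"
    by (rule psc_dcong) (auto simp: d'_def)
  also have "psc T (b + a + d' k) d {..<k} x = psc T (b + a') d {..<k} x"
  proof (rule psc_modb)
    have "(b + a + d' k) mod T = (b + a + (a' + T - a)) mod T" unfolding d'_def by (simp add: mod_add_right_eq)
    also have "b + a + (a' + T - a) = (b + a') + T" using a by simp
    finally show "(b + a + d' k) mod T = (b + a') mod T" by simp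
  qed
  also have "psc T (b + a) d {..<k} x = psc T b d {..<k} ((x + T - a) mod T)" by (rule psc_shift[OF x a(1)])
  also have "psc T (b + a') d {..<k} x = psc T b d {..<k} ((x + T - a') mod T)" by (rule psc_shift[OF x a(2)])
  finally show ?thesis unfolding d'_def .
qed

lemma cycle_sum:
  fixes A :: "nat set" and \<phi> :: "nat \<Rightarrow> real"
  assumes fA: "finite A" and s: "card A \<ge> 1"
  defines "e \<equiv> sorted_list_of_set A"
  shows "2 * (\<Sum>a\<in>A. \<phi> a) = (\<Sum>j<card A. \<phi> (e!j) + \<phi> (e!((j+1) mod card A)))"
proof -
  define s where "s = card A"
  have de: "distinct e" "set e = A" "length e = s" unfolding e_def s_def using fA by auto
  have bn: "bij_betw ((!) e) {..<s} A" by (rule bij_betw_nth) (use de in auto)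
  have S1: "(\<Sum>j<s. \<phi> (e!j)) = (\<Sum>a\<in>A. \<phi> a)" by (rule sum.reindex_bij_betw[OF bn])
  have bs: "bij_betw (\<lambda>j. (j+1) mod s) {..<s} {..<s}"
  proof -
    have inj: "inj_on (\<lambda>j. (j+1) mod s) {..<s}"
    proof (rule inj_onI)
      fix i j assume ij: "i \<in> {..<s}" "j \<in> {..<s}" "(i+1) mod s = (j+1) mod s"
      show "i = j"
      proof (cases "i + 1 = s")
        case True
        then show ?thesis using ij by (cases "j + 1 = s") auto
      next
        case False
        then show ?thesis using ij by (cases "j + 1 = s") auto
      qed
    qed
    have sub: "(\<lambda>j. (j+1) mod s) ` {..<s} \<subseteq> {..<s}" using s unfolding s_def by auto
    show ?thesis unfolding bij_betw_def using inj endo_inj_surj[OF _ sub inj] by auto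
  qed
  have S2: "(\<Sum>j<s. \<phi> (e!((j+1) mod s))) = (\<Sum>j<s. \<phi> (e!j))"
    by (rule sum.reindex_bij_betw[OF bs, of "\<lambda>j. \<phi> (e!j)"])
  show ?thesis unfolding s_def[symmetric] sum.distrib S2 S1 by simp
qed



inductive mix :: "nat \<Rightarrow> nat \<Rightarrow> (nat \<Rightarrow> real) \<Rightarrow> bool" for T k where
  mix_zero: "mix T k (\<lambda>x. 0)"
| mix_add: "mix T k f \<Longrightarrow> mix T k g \<Longrightarrow> mix T k (\<lambda>x. f x + g x)"
| mix_gen: "(\<forall>i<k. 0 < d i \<and> d i < T) \<Longrightarrow> mix T k (psc T b d {..<k})"
| mix_cong: "mix T k f \<Longrightarrow> (\<forall>x<T. f x = g x) \<Longrightarrow> mix T k g"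

lemma mix_sum:
  assumes "finite S" "\<forall>s\<in>S. mix T k (g s)"
  shows "mix T k (\<lambda>x. \<Sum>s\<in>S. g s x)"
  using assms
proof (induction S rule: finite_induct)
  case empty
  then show ?case using mix_zero by simp
next
  case (insert a S)
  have "mix T k (\<lambda>x. g a x + (\<Sum>s\<in>S. g s x))" using insert by (intro mix_add) auto
  then show ?case using insert by simp
qed

definition good :: "nat \<Rightarrow> real \<Rightarrow> (nat \<Rightarrow> real) \<Rightarrow> bool" where
  "good T e f \<longleftrightarrow> (\<forall>x<T. f x \<le> (1 + e) * f ((x + T div 2) mod T))"

lemma mix_good:
  assumes "mix T k f" "T > 0" "e \<ge> 0"
    and gen: "\<forall>b d. (\<forall>i<k. 0 < d i \<and> d i < T) \<longrightarrow> good T e (psc T b d {..<k})"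
  shows "good T e f"
  using assms(1)
proof (induction rule: mix.induct)
  case mix_zero
  then show ?case unfolding good_def by simp
next
  case (mix_add f g)
  then show ?case unfolding good_def by (simp add: distrib_left add_mono)
next
  case (mix_gen d b)
  then show ?case using gen by blast
next
  case (mix_cong f g)
  have "(x + T div 2) mod T < T" for x using assms(2) by simp
  then show ?case using mix_cong unfolding good_def by metis
qed

lemma eqT:
  fixes z T :: nat
  assumes "0 < z" "z < 2*T" "z mod T = 0"
  shows "z = T"
proof -
  obtain q where q: "z = T*q" using assms(3) by (metis mod_eq_0_iff_dvd dvdE)
  have "q \<noteq> 0" using q assms(1) by auto
  moreover have "q < 2" using q assms(2) by (metis mult_less_cancel1 mult.commute)
  ultimately have "q = 1" by linarith
  then show ?thesis using q by simp
qed

lemma mix_step: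
  assumes "mix T k f" and fA: "finite A" and AT: "A \<subseteq> {..<T}" and cA: "card A \<ge> 2"
  shows "mix T (Suc k) (\<lambda>x. 2 * (\<Sum>a\<in>A. f ((x + T - a) mod T)))"
  using assms(1)
proof (induction rule: mix.induct)
  case mix_zero
  show ?case by (rule mix.mix_cong[OF mix.mix_zero[of T "Suc k"]]) simp
next
  case (mix_add f g)
  have "mix T (Suc k) (\<lambda>x. 2 * (\<Sum>a\<in>A. f ((x + T - a) mod T)) + 2 * (\<Sum>a\<in>A. g ((x + T - a) mod T)))"
    using mix_add by (intro mix.mix_add)
  then show ?case by (rule mix.mix_cong) (simp add: sum.distrib distrib_left)
next
  case (mix_cong f g)
  have "A \<noteq> {}" using cA by auto
  then obtain a0 where "a0 \<in> A" by blast
  then have T0: "T > 0" using AT by auto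
  from mix_cong.hyps(2) have fg: "\<And>x. x < T \<Longrightarrow> f x = g x" by blast
  have eq: "\<forall>x<T. 2 * (\<Sum>a\<in>A. f ((x + T - a) mod T)) = 2 * (\<Sum>a\<in>A. g ((x + T - a) mod T))"
  proof (intro allI impI)
    fix x assume "x < T"
    have "(\<Sum>a\<in>A. f ((x + T - a) mod T)) = (\<Sum>a\<in>A. g ((x + T - a) mod T))"
      by (rule sum.cong) (use fg T0 in auto)
    then show "2 * (\<Sum>a\<in>A. f ((x + T - a) mod T)) = 2 * (\<Sum>a\<in>A. g ((x + T - a) mod T))" by simp
  qed
  show ?case by (rule mix.mix_cong[OF mix_cong.IH eq])
next
  case (mix_gen d b)
  define s where "s = card A"
  define e where "e = sorted_list_of_set A"
  have de: "distinct e" "set e = A" "length e = s" unfolding e_def s_def using fA by auto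
  have eT: "e!j < T" if "j < s" for j using de AT that nth_mem by fastforce
  define D where "D = (\<lambda>j. d(k := (e!((j+1) mod s) + T - e!j) mod T))"
  have "mix T (Suc k) (\<lambda>x. \<Sum>j<s. psc T (b + e!j) (D j) {..<Suc k} x)"
  proof (rule mix_sum)
    show "\<forall>j\<in>{..<s}. mix T (Suc k) (psc T (b + e!j) (D j) {..<Suc k})"
    proof
      fix j assume j: "j \<in> {..<s}"
      have s2: "s \<ge> 2" using cA s_def by simp
      have j1: "(j+1) mod s < s" using s2 by simp
      have neq: "j \<noteq> (j+1) mod s"
        using j s2 by (cases "j + 1 = s") auto
      have ne: "e!((j+1) mod s) \<noteq> e!j" using de j j1 neq nth_eq_iff_index_eq by fastforce
      have a1: "e!j < T" "e!((j+1) mod s) < T" using eT j j1 by auto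
      have dk: "0 < (e!((j+1) mod s) + T - e!j) mod T \<and> (e!((j+1) mod s) + T - e!j) mod T < T"
      proof
        show "(e!((j+1) mod s) + T - e!j) mod T < T" using a1 by simp
        show "0 < (e!((j+1) mod s) + T - e!j) mod T"
        proof (rule ccontr)
          assume "\<not> ?thesis"
          then have z: "(e!((j+1) mod s) + T - e!j) mod T = 0" by simp
          have "e!((j+1) mod s) + T - e!j > 0" "e!((j+1) mod s) + T - e!j < 2*T" using a1 by auto
          then have "e!((j+1) mod s) + T - e!j = T" using z by (rule eqT)
          then show False using ne a1 by simp
        qed
      qed
      show "mix T (Suc k) (psc T (b + e!j) (D j) {..<Suc k})"
        by (rule mix.mix_gen) (use mix_gen dk in \<open>auto simp: D_def\<close>)
    qed
  qed simp
  moreover have "\<forall>x<T. (\<Sum>j<s. psc T (b + e!j) (D j) {..<Suc k} x)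
      = 2 * (\<Sum>a\<in>A. psc T b d {..<k} ((x + T - a) mod T))"
  proof (intro allI impI)
    fix x assume x: "x < T"
    have s1: "card A \<ge> 1" using cA by simp
    have "(\<Sum>j<s. psc T (b + e!j) (D j) {..<Suc k} x)
        = (\<Sum>j<s. psc T b d {..<k} ((x + T - e!j) mod T) + psc T b d {..<k} ((x + T - e!((j+1) mod s)) mod T))"
    proof (rule sum.cong)
      fix j assume j: "j \<in> {..<s}"
      have j1: "(j+1) mod s < s" using j by simp
      show "psc T (b + e!j) (D j) {..<Suc k} x = psc T b d {..<k} ((x + T - e!j) mod T) + psc T b d {..<k} ((x + T - e!((j+1) mod s)) mod T)"
        unfolding D_def by (rule psc_pair[OF x]) (use eT j j1 in auto)
    qed simp
    also have "\<dots> = 2 * (\<Sum>a\<in>A. psc T b d {..<k} ((x + T - a) mod T))"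
      using cycle_sum[OF fA s1, of "\<lambda>a. psc T b d {..<k} ((x + T - a) mod T)"]
      unfolding s_def e_def by simp
    finally show "(\<Sum>j<s. psc T (b + e!j) (D j) {..<Suc k} x) = 2 * (\<Sum>a\<in>A. psc T b d {..<k} ((x + T - a) mod T))" .
  qed
  ultimately show ?case by (rule mix.mix_cong)
qed



lemma sumset_lt:
  assumes "T > 0"
  shows "y \<in># sumset_mset T A k \<Longrightarrow> y < T"
proof (induction k arbitrary: y)
  case 0
  then show ?case using assms by simp
next
  case (Suc k)
  show ?case
  proof (cases "finite (A k)")
    case True
    have "y \<in> set_mset (\<Sum>a\<in>A k. image_mset (\<lambda>x. (x + a) mod T) (sumset_mset T A k))"
      using Suc.prems by simp
    then have "y \<in> (\<Union>a\<in>A k. set_mset (image_mset (\<lambda>x. (x + a) mod T) (sumset_mset T A k)))"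
      by (simp only: set_mset_sum[OF True])
    then obtain a z where "y = (z + a) mod T" by auto
    then show ?thesis using assms by simp
  next
    case False
    then show ?thesis using Suc.prems by simp
  qed
qed

lemma count_image_shift:
  fixes T x a :: nat and M :: "nat multiset"
  assumes T: "T > 0" and x: "x < T" and a: "a < T" and M: "\<forall>y\<in>#M. y < T"
  shows "count (image_mset (\<lambda>y. (y + a) mod T) M) x = count M ((x + T - a) mod T)"
proof -
  define y0 where "y0 = (x + T - a) mod T"
  have y0T: "y0 < T" unfolding y0_def by (rule mod_less_divisor[OF T])
  have eq: "{y. y \<in># M \<and> x = (y + a) mod T} = {y0} \<inter> set_mset M"
  proof (intro set_eqI iffI)
    fix y assume "y \<in> {y. y \<in># M \<and> x = (y + a) mod T}"
    then have y: "y \<in># M" "(y + a) mod T = x" by auto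
    then have "y mod T = y0" using shift_iff[OF x a] unfolding y0_def by simp
    then have "y = y0" using M y(1) by simp
    then show "y \<in> {y0} \<inter> set_mset M" using y by simp
  next
    fix y assume "y \<in> {y0} \<inter> set_mset M"
    then have y: "y = y0" "y \<in># M" by auto
    have "y mod T = (x + T - a) mod T" using y y0T unfolding y0_def by simp
    then have "(y + a) mod T = x" using shift_iff[OF x a] by simp
    then show "y \<in> {y. y \<in># M \<and> x = (y + a) mod T}" using y by simp
  qed
  have "count (image_mset (\<lambda>y. (y + a) mod T) M) x = (\<Sum>y | y \<in># M \<and> x = (y + a) mod T. count M y)"
    by (rule count_image_mset')
  also have "\<dots> = (\<Sum>y\<in>{y0} \<inter> set_mset M. count M y)" using eq by simp
  also have "\<dots> = count M y0"
    by (cases "y0 \<in># M") (auto simp: not_in_iff)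
  finally show ?thesis unfolding y0_def .
qed

lemma count_step:
  assumes T: "T > 0" and x: "x < T" and AT: "A k \<subseteq> {..<T}"
  shows "count (sumset_mset T A (Suc k)) x = (\<Sum>a\<in>A k. count (sumset_mset T A k) ((x + T - a) mod T))"
proof -
  have "count (sumset_mset T A (Suc k)) x = (\<Sum>a\<in>A k. count (image_mset (\<lambda>y. (y + a) mod T) (sumset_mset T A k)) x)"
    by (simp add: count_sum)
  also have "\<dots> = (\<Sum>a\<in>A k. count (sumset_mset T A k) ((x + T - a) mod T))"
  proof (rule sum.cong)
    fix a assume "a \<in> A k"
    then have "a < T" using AT by auto
    then show "count (image_mset (\<lambda>y. (y + a) mod T) (sumset_mset T A k)) x = count (sumset_mset T A k) ((x + T - a) mod T)"
      using count_image_shift[OF T x] sumset_lt[OF T] by blast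
  qed simp
  finally show ?thesis .
qed

lemma mix_sumset:
  assumes T: "T > 0"
  shows "(\<forall>i<k. A i \<subseteq> {..<T} \<and> card (A i) \<ge> 2) \<Longrightarrow> mix T k (\<lambda>x. 2^k * real (count (sumset_mset T A k) x))"
proof (induction k)
  case 0
  have m: "mix T 0 (psc T 0 (\<lambda>_. 1) {..<0})" by (rule mix_gen) simp
  show ?case
  proof (rule mix_cong[OF m], intro allI impI)
    fix x assume x: "x < T"
    have "{J. J \<subseteq> {..<0::nat} \<and> (0 + sum (\<lambda>_. 1::nat) J) mod T = x} = (if x = 0 then {{}} else {})"
      by auto
    then show "psc T 0 (\<lambda>_. 1) {..<0} x = 2^0 * real (count (sumset_mset T A 0) x)"
      unfolding psc_def by simp
  qed
next
  case (Suc k)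
  have IH: "mix T k (\<lambda>x. 2^k * real (count (sumset_mset T A k) x))" using Suc by auto
  have Ak: "A k \<subseteq> {..<T}" "card (A k) \<ge> 2" using Suc.prems by auto
  have fA: "finite (A k)" using Ak(1) finite_subset by blast
  have m: "mix T (Suc k) (\<lambda>x. 2 * (\<Sum>a\<in>A k. 2^k * real (count (sumset_mset T A k) ((x + T - a) mod T))))"
    by (rule mix_step[OF IH fA Ak])
  show ?case
  proof (rule mix_cong[OF m], intro allI impI)
    fix x assume x: "x < T"
    show "2 * (\<Sum>a\<in>A k. 2^k * real (count (sumset_mset T A k) ((x + T - a) mod T))) = 2^Suc k * real (count (sumset_mset T A (Suc k)) x)"
      unfolding count_step[of T x A k, OF T x Ak(1)] by (simp add: sum_distrib_left mult.assoc)
  qed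
qed



lemma eps_le:
  fixes T n r :: nat
  assumes "T > 0" "n > 0" "r > 0" "r \<le> T * n"
  shows "64 * real T / sqrt (real n) \<le> 64 * real T powr (3/2) / sqrt (real r)"
proof -
  have p: "real T powr (3/2) = real T * sqrt (real T)"
  proof -
    have "real T powr (3/2) = real T powr (1 + 1/2)" by simp
    also have "\<dots> = real T powr 1 * real T powr (1/2)" by (rule powr_add)
    also have "\<dots> = real T * sqrt (real T)" using assms(1) by (simp add: powr_half_sqrt)
    finally show ?thesis .
  qed
  have sT: "sqrt (real T) > 0" "sqrt (real n) > 0" "sqrt (real r) > 0" using assms by auto
  have "sqrt (real r) \<le> sqrt (real T) * sqrt (real n)"
  proof -
    have "real r \<le> real T * real n" using assms(4) by (metis of_nat_le_iff of_nat_mult)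
    then show ?thesis by (simp add: real_sqrt_mult[symmetric])
  qed
  then have "(64 * real T * sqrt (real T)) / (sqrt (real T) * sqrt (real n)) \<le> (64 * real T * sqrt (real T)) / sqrt (real r)"
    using sT by (intro frac_le) auto
  moreover have "(64 * real T * sqrt (real T)) / (sqrt (real T) * sqrt (real n)) = 64 * real T / sqrt (real n)"
    using sT by (simp add: field_simps)
  ultimately show ?thesis unfolding p by (simp add: mult.assoc)
qed

lemma gen_good:
  assumes T: "T = 2^t" "t \<ge> 1" and r: "T^3 \<le> r" and d: "\<forall>i<r. 0 < d i \<and> d i < T"
  shows "good T (64 * real T powr (3/2) / sqrt (real r)) (psc T b d {..<r})"
proof -
  define S where "S = {1..<T}"
  define f where "f = (\<lambda>dd. card {i\<in>{..<r}. d i = dd})"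
  have T2: "T \<ge> 2" using T by (metis one_less_numeral_iff power_increasing_iff power_one_right semiring_norm(76) Suc_1 Suc_le_eq one_le_numeral power_increasing)
  have fS: "finite S" "S \<noteq> {}" unfolding S_def using T2 by auto
  have cover: "{..<r} = (\<Union>dd\<in>S. {i\<in>{..<r}. d i = dd})" unfolding S_def using d by fastforce
  have "r = card (\<Union>dd\<in>S. {i\<in>{..<r}. d i = dd})" using cover by (metis card_lessThan)
  also have "\<dots> = (\<Sum>dd\<in>S. f dd)" unfolding f_def
    by (rule card_UN_disjoint[OF fS(1)]) auto
  finally have rs: "r = (\<Sum>dd\<in>S. f dd)" .
  define nm where "nm = Max (f ` S)"
  have "nm \<in> f ` S" unfolding nm_def using fS by (intro Max_in) auto
  then obtain dd where dd: "dd \<in> S" "f dd = nm" by auto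
  have "\<forall>x\<in>S. f x \<le> nm" unfolding nm_def using fS by auto
  then have "(\<Sum>dd\<in>S. f dd) \<le> of_nat (card S) * nm" by (intro sum_bounded_above) auto
  then have "(\<Sum>dd\<in>S. f dd) \<le> card S * nm" by simp
  then have rle: "r \<le> (T - 1) * nm" using rs unfolding S_def by simp
  have nT: "T^2 \<le> nm"
  proof (rule ccontr)
    assume "\<not> ?thesis"
    then have "nm < T^2" by simp
    then have "(T-1) * nm < (T-1) * T^2" using T2 by (intro mult_strict_left_mono) auto
    also have "\<dots> \<le> T * T^2" by simp
    also have "\<dots> = T^3" by (simp add: power_Suc[symmetric] del: power_Suc)
    finally show False using rle r by linarith
  qed
  define D where "D = {i\<in>{..<r}. d i = dd}"
  define R where "R = {..<r} - D"
  have cD: "card D = nm" unfolding D_def using dd f_def by simp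
  have DR: "D \<union> R = {..<r}" unfolding R_def D_def by auto
  have g: "\<forall>b x. x < T \<longrightarrow> psc T b d (D \<union> R) x \<le> (1 + 64 * real T / sqrt (real (card D))) * psc T b d (D \<union> R) ((x + T div 2) mod T)"
    by (rule psc_good_aux[OF T, where dd=dd and D=D and d=d and R=R]) (use dd d nT cD in \<open>auto simp: S_def D_def R_def\<close>)
  have n0: "nm > 0" using nT T2 by (metis gr0I le_zero_eq power_not_zero zero_neq_numeral)
  have r0: "r > 0" using r T2 by (metis gr0I le_zero_eq power_not_zero zero_neq_numeral)
  have rTn: "r \<le> T * nm" using rle by (metis diff_le_self le_trans mult_le_mono1)
  have el: "64 * real T / sqrt (real nm) \<le> 64 * real T powr (3/2) / sqrt (real r)"
    by (rule eps_le) (use T2 n0 r0 rTn in auto)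
  show ?thesis unfolding good_def
  proof (intro allI impI)
    fix x assume x: "x < T"
    have "psc T b d {..<r} x \<le> (1 + 64 * real T / sqrt (real nm)) * psc T b d {..<r} ((x + T div 2) mod T)"
      using g x cD DR by metis
    also have "\<dots> \<le> (1 + 64 * real T powr (3/2) / sqrt (real r)) * psc T b d {..<r} ((x + T div 2) mod T)"
      using el by (intro mult_right_mono) (auto simp: psc_def)
    finally show "psc T b d {..<r} x \<le> (1 + 64 * real T powr (3/2) / sqrt (real r)) * psc T b d {..<r} ((x + T div 2) mod T)" .
  qed
qed

theorem theorem4:
  shows "\<exists>c0::real. c0 > 0 \<and>
    (\<forall>(t::nat) (r::nat) (A::nat \<Rightarrow> nat set).
       t \<ge> 1 \<longrightarrow> r \<ge> (2^t)^3 \<longrightarrow>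
       (\<forall>i<r. A i \<subseteq> zmod_set (2^t) \<and> card (A i) \<ge> 2) \<longrightarrow>
       bias_at_most (2^t) (sumset_mset (2^t) A r) {0, 2^(t-1)}
         (c0 * real (2^t) powr (3/2) / sqrt (real r)))"
proof (intro exI[of _ 64] conjI allI impI)
  show "(0::real) < 64" by simp
  fix t r :: nat and A :: "nat \<Rightarrow> nat set"
  assume t: "t \<ge> 1" and r: "r \<ge> (2^t)^3" and A: "\<forall>i<r. A i \<subseteq> zmod_set (2^t) \<and> card (A i) \<ge> 2"
  define T where "T = (2::nat)^t"
  have T0: "T > 0" unfolding T_def by simp
  define e where "e = 64 * real T powr (3/2) / sqrt (real r)"
  have e0: "e \<ge> 0" unfolding e_def by simp
  have A': "\<forall>i<r. A i \<subseteq> {..<T} \<and> card (A i) \<ge> 2" using A unfolding zmod_set_def T_def by simp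
  have m: "mix T r (\<lambda>x. 2^r * real (count (sumset_mset T A r) x))"
    by (rule mix_sumset[OF T0 A'])
  have gd: "good T e (\<lambda>x. 2^r * real (count (sumset_mset T A r) x))"
  proof (rule mix_good[OF m T0 e0], intro allI impI)
    fix b d assume dh: "\<forall>i<r. 0 < d i \<and> d i < T"
    show "good T e (psc T b d {..<r})" unfolding e_def
      by (rule gen_good[OF T_def t _ dh]) (use r in \<open>simp add: T_def\<close>)
  qed
  have TD: "T div 2 = 2^(t-1)" unfolding T_def using t by (cases t) auto
  show "bias_at_most (2^t) (sumset_mset (2^t) A r) {0, 2^(t-1)} (64 * real (2^t) powr (3/2) / sqrt (real r))"
    unfolding bias_at_most_def T_def[symmetric] e_def[symmetric]
  proof (intro ballI)
    fix a h :: nat assume a: "a \<in># sumset_mset T A r" and h: "h \<in> {0, 2^(t-1)}"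
    have aT: "a < T" by (rule sumset_lt[OF T0 a])
    show "real (count (sumset_mset T A r) a) \<le> (1 + e) * real (count (sumset_mset T A r) ((a + h) mod T))"
    proof (cases "h = 0")
      case True
      have "real (count (sumset_mset T A r) a) \<le> (1 + e) * real (count (sumset_mset T A r) a)"
        using e0 by (simp add: mult_le_cancel_right1)
      then show ?thesis using True aT by simp
    next
      case False
      then have hh: "h = T div 2" using h TD by auto
      have "2^r * real (count (sumset_mset T A r) a) \<le> (1 + e) * (2^r * real (count (sumset_mset T A r) ((a + T div 2) mod T)))"
        using gd aT unfolding good_def by blast
      then have "2^r * real (count (sumset_mset T A r) a) \<le> 2^r * ((1 + e) * real (count (sumset_mset T A r) ((a + T div 2) mod T)))"
        by (simp add: algebra_simps)
      then show ?thesis using hh by simp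
    qed
  qed
qed

end
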